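(* Let $A,B\in\mathrm{SL}_2\mathbb{Z}$ be noncommuting, well oriented, with $2\le\mathrm{tr}(A)<\mathrm{tr}(B)$ and $\mathrm{tr}(AB)>\mathrm{tr}(B^2)$, and assume $[(ab^2)^2]\le[(ab)^3]-2$. Fix a word $w$ and let $k\ge1$ be such that the length of $wab^2(ab)^kab^2$ is a multiple of $6$. If $w$ is empty, or is a product of copies of $ab$ and $ab^2$, then $[wab^2(ab)^kab^2]<[w(ab)^{k+3}]$.
   Context: Words are finite strings over $\{a,b\}$; $\phi$ is the monoid homomorphism with $\phi(a)=A,\phi(b)=B$, and $[w]=\mathrm{tr}(\phi(w))$. Fixed points are for the Möbius action on $\partial\mathcal{H}=\mathbb{P}^1\mathbb{R}$; $\alpha^\pm$ ($\beta^\pm$) are the attracting/repelling fixed points of $A$ ($B$), both equal to the unique fixed point if parabolic. With $\partial\mathcal{H}$ cyclically ordered and $[\alpha,\beta]$ the closed counterclockwise interval from $\alpha$ to $\beta$, let $I^+=\{\alpha^+\}$ if $\alpha^+=\beta^+$, and otherwise the one of $[\alpha^+,\beta^+],[\beta^+,\alpha^+]$ mapped into itself by both $A$ and $B$ (if it exists); define $I^-$ likewise with $A^{-1},B^{-1},\alpha^-,\beta^-$. The pair is coherently oriented if both exist, and well oriented if $A,B$ is coherently oriented but $A,B^{-1}$ is not. *)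

theory Defs
  imports "HOL-Analysis.Analysis"
begin

type_synonym mat2 = "int^2^2"

definition SL2Z :: "mat2 set" where
  "SL2Z = {M. det M = 1}"

definition sl2_inv :: "mat2 \<Rightarrow> mat2" where
  "sl2_inv M = (\<chi> i j. if i = 1 \<and> j = 1 then M $ 2 $ 2
                     else if i = 1 \<and> j = 2 then - M $ 1 $ 2
                     else if i = 2 \<and> j = 1 then - M $ 2 $ 1
                     else M $ 1 $ 1)"

datatype letter = La | Lb

definition phi :: "mat2 \<Rightarrow> mat2 \<Rightarrow> letter list \<Rightarrow> mat2" where
  "phi A B w = foldr (\<lambda>c M. (case c of La \<Rightarrow> A | Lb \<Rightarrow> B) ** M) w (mat 1)"

definition wtr :: "mat2 \<Rightarrow> mat2 \<Rightarrow> letter list \<Rightarrow> int" where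
  "wtr A B w = trace (phi A B w)"

text \<open>The projective line P^1(R) = boundary of H, as R plus a point at infinity (None).\<close>
type_synonym pt = "real option"

definition mob :: "mat2 \<Rightarrow> pt \<Rightarrow> pt" where
  "mob M p = (let a = real_of_int (M$1$1); b = real_of_int (M$1$2);
                  c = real_of_int (M$2$1); d = real_of_int (M$2$2) in
     case p of
       None \<Rightarrow> (if c = 0 then None else Some (a / c))
     | Some x \<Rightarrow> (if c * x + d = 0 then None else Some ((a * x + b) / (c * x + d))))"

definition fixpt :: "mat2 \<Rightarrow> pt \<Rightarrow> bool" where
  "fixpt M p \<longleftrightarrow> mob M p = p"

text \<open>Multiplier at a fixed point: the eigenvalue of the corresponding eigenvector
  (x,1) resp. (1,0). The derivative of the Moebius map there is its inverse square,
  so the fixed point is attracting iff |mult| > 1, repelling iff |mult| < 1,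
  and |mult| = 1 in the parabolic case.\<close>
definition fp_mult :: "mat2 \<Rightarrow> pt \<Rightarrow> real" where
  "fp_mult M p = (case p of None \<Rightarrow> real_of_int (M$1$1)
                   | Some x \<Rightarrow> real_of_int (M$2$1) * x + real_of_int (M$2$2))"

text \<open>Attracting / repelling fixed point (both equal the unique fixed point if parabolic).\<close>
definition attr :: "mat2 \<Rightarrow> pt" where
  "attr M = (THE p. fixpt M p \<and> \<bar>fp_mult M p\<bar> \<ge> 1)"

definition repel :: "mat2 \<Rightarrow> pt" where
  "repel M = (THE p. fixpt M p \<and> \<bar>fp_mult M p\<bar> \<le> 1)"

text \<open>Closed counterclockwise interval [p,q] on the boundary of H
  (counterclockwise = increasing along R, then through infinity).\<close>
definition ccw_int :: "pt \<Rightarrow> pt \<Rightarrow> pt set" where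
  "ccw_int p q = (if p = q then {p} else
     (case (p, q) of
        (Some x, Some y) \<Rightarrow> (if x \<le> y then Some ` {x..y}
                             else Some ` {x..} \<union> {None} \<union> Some ` {..y})
      | (None, Some y) \<Rightarrow> {None} \<union> Some ` {..y}
      | (Some x, None) \<Rightarrow> Some ` {x..} \<union> {None}
      | (None, None) \<Rightarrow> {None}))"

definition invariant_int :: "mat2 \<Rightarrow> mat2 \<Rightarrow> pt set \<Rightarrow> bool" where
  "invariant_int A B I \<longleftrightarrow> mob A ` I \<subseteq> I \<and> mob B ` I \<subseteq> I"

definition Iplus_exists :: "mat2 \<Rightarrow> mat2 \<Rightarrow> bool" where
  "Iplus_exists A B \<longleftrightarrow> attr A = attr B \<or>
     invariant_int A B (ccw_int (attr A) (attr B)) \<or>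
     invariant_int A B (ccw_int (attr B) (attr A))"

definition Iminus_exists :: "mat2 \<Rightarrow> mat2 \<Rightarrow> bool" where
  "Iminus_exists A B \<longleftrightarrow> repel A = repel B \<or>
     invariant_int (sl2_inv A) (sl2_inv B) (ccw_int (repel A) (repel B)) \<or>
     invariant_int (sl2_inv A) (sl2_inv B) (ccw_int (repel B) (repel A))"

definition coherently_oriented :: "mat2 \<Rightarrow> mat2 \<Rightarrow> bool" where
  "coherently_oriented A B \<longleftrightarrow> Iplus_exists A B \<and> Iminus_exists A B"

definition well_oriented :: "mat2 \<Rightarrow> mat2 \<Rightarrow> bool" where
  "well_oriented A B \<longleftrightarrow> coherently_oriented A B \<and> \<not> coherently_oriented A (sl2_inv B)"

definition pw :: "letter list \<Rightarrow> nat \<Rightarrow> letter list" where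
  "pw u n = concat (replicate n u)"

end

theory Submission
  imports Defs
begin

lemma mm_radd: fixes A B C :: "real^2^2" shows "(A + B) ** C = A ** C + B ** C"
  by (simp add: vec_eq_iff matrix_matrix_mult_def sum.distrib algebra_simps)
lemma mm_ladd: fixes A B C :: "real^2^2" shows "A ** (B + C) = A ** B + A ** C"
  by (simp add: vec_eq_iff matrix_matrix_mult_def sum.distrib algebra_simps)
lemma mm_lsub: fixes A B C :: "real^2^2" shows "A ** (B - C) = A ** B - A ** C"
  by (simp add: vec_eq_iff matrix_matrix_mult_def sum_subtractf algebra_simps)
lemma mm_rsub: fixes A B C :: "real^2^2" shows "(A - B) ** C = A ** C - B ** C"
  by (simp add: vec_eq_iff matrix_matrix_mult_def sum_subtractf algebra_simps)
lemma mm_lscale: fixes A B :: "real^2^2" shows "(c *\<^sub>R A) ** B = c *\<^sub>R (A ** B)"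
  by (simp add: vec_eq_iff matrix_matrix_mult_def sum_distrib_left algebra_simps)
lemma mm_rscale: fixes A B :: "real^2^2" shows "A ** (c *\<^sub>R B) = c *\<^sub>R (A ** B)"
  by (simp add: vec_eq_iff matrix_matrix_mult_def sum_distrib_left algebra_simps)
lemma trace_scale: fixes A :: "real^2^2" shows "trace (c *\<^sub>R A) = c * trace A"
  by (simp add: trace_def sum_distrib_left)
lemma trace_plus: fixes A B :: "real^2^2" shows "trace (A + B) = trace A + trace B"
  by (simp add: trace_def sum.distrib)
lemma trace_minus: fixes A B :: "real^2^2" shows "trace (A - B) = trace A - trace B"
  by (simp add: trace_def sum_subtractf)
lemma trace_one: "trace (mat 1 :: real^2^2) = 2"
  by (simp add: trace_def sum_2 mat_def)

lemma CH2: fixes M :: "real^2^2"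
  shows "M ** M = trace M *\<^sub>R M - det M *\<^sub>R mat 1"
  by (simp add: vec_eq_iff forall_2 matrix_matrix_mult_def sum_2 trace_def det_2 mat_def algebra_simps)

lemma rank1: fixes P M :: "real^2^2" assumes "det P = 0"
  shows "P ** M ** P = trace (P ** M) *\<^sub>R P"
  using assms by (simp add: vec_eq_iff forall_2 matrix_matrix_mult_def sum_2 trace_def det_2 mat_def algebra_simps)

type_synonym tup = "real \<times> real \<times> real \<times> real \<times> real"

fun mP :: "real \<Rightarrow> real \<Rightarrow> real \<Rightarrow> tup \<Rightarrow> tup" where
  "mP t c d (u0,u1,u2,u3,u4) = (c*u0, c*u1 + d*(u0+u1+t*u3), c*u2, c*u3, c*u4 + d*(u2+u4))"
fun mQ :: "real \<Rightarrow> real \<Rightarrow> real \<Rightarrow> tup \<Rightarrow> tup" where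
  "mQ t c d (u0,u1,u2,u3,u4) = (c*u0, c*u1, c*u2 + d*(u0+u2+t*u4), c*u3 + d*(u1+u3), c*u4)"
fun trf :: "real \<Rightarrow> tup \<Rightarrow> real" where
  "trf t (u0,u1,u2,u3,u4) = 2*u0 + u1 + u2 + t*(u3+u4)"
fun ev :: "real^2^2 \<Rightarrow> real^2^2 \<Rightarrow> tup \<Rightarrow> real^2^2" where
  "ev P Q (u0,u1,u2,u3,u4) = u0 *\<^sub>R mat 1 + u1 *\<^sub>R P + u2 *\<^sub>R Q + u3 *\<^sub>R (P ** Q) + u4 *\<^sub>R (Q ** P)"
fun pos5 :: "tup \<Rightarrow> bool" where
  "pos5 (u0,u1,u2,u3,u4) \<longleftrightarrow> u0 > 0 \<and> u1 \<ge> 0 \<and> u2 \<ge> 0 \<and> u3 \<ge> 0 \<and> u4 \<ge> 0"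

lemma ev_mulP:
  assumes PP: "P ** P = P" and PQP: "P ** Q ** P = t *\<^sub>R P"
  shows "ev P Q u ** (c *\<^sub>R mat 1 + d *\<^sub>R P) = ev P Q (mP t c d u)"
proof -
  obtain u0 u1 u2 u3 u4 where u: "u = (u0,u1,u2,u3,u4)" by (metis prod_cases5)
  have QPP: "Q ** P ** P = Q ** P" by (metis PP matrix_mul_assoc)
  show ?thesis unfolding u
    by (simp add: mm_radd mm_ladd mm_lscale mm_rscale PP PQP QPP algebra_simps scaleR_add_left)
qed

lemma ev_mulQ:
  assumes QQ: "Q ** Q = Q" and QPQ: "Q ** P ** Q = t *\<^sub>R Q"
  shows "ev P Q u ** (c *\<^sub>R mat 1 + d *\<^sub>R Q) = ev P Q (mQ t c d u)"
proof -
  obtain u0 u1 u2 u3 u4 where u: "u = (u0,u1,u2,u3,u4)" by (metis prod_cases5)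
  have PQQ: "P ** Q ** Q = P ** Q" by (metis QQ matrix_mul_assoc)
  show ?thesis unfolding u
    by (simp add: mm_radd mm_ladd mm_lscale mm_rscale QQ QPQ PQQ algebra_simps scaleR_add_left)
qed

lemma ev_trace:
  assumes "trace P = 1" "trace Q = 1" "trace (P ** Q) = t"
  shows "trace (ev P Q u) = trf t u"
proof -
  obtain u0 u1 u2 u3 u4 where u: "u = (u0,u1,u2,u3,u4)" by (metis prod_cases5)
  have "trace (Q ** P) = t" using assms(3) trace_mul_sym by metis
  then show ?thesis using assms unfolding u
    by (simp add: trace_plus trace_scale trace_one algebra_simps)
qed

lemma mP_pos: "pos5 u \<Longrightarrow> t \<ge> 0 \<Longrightarrow> c > 0 \<Longrightarrow> d \<ge> 0 \<Longrightarrow> pos5 (mP t c d u)"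
  by (cases u rule: prod_cases5) simp
lemma mQ_pos: "pos5 u \<Longrightarrow> t \<ge> 0 \<Longrightarrow> c > 0 \<Longrightarrow> d \<ge> 0 \<Longrightarrow> pos5 (mQ t c d u)"
  by (cases u rule: prod_cases5) simp

lemma final_ident:
  fixes a b t K iK g h u0 u1 u2 u3 u4 m A iA :: real
  assumes "K * iK = 1" "b * g = 1" "h = b - g" "m = g + h*t" "A * iA = 1"
  shows "trf t (mP t (iA*iK) (A*K - iA*iK) (u0,u1,u2,u3,u4))
        - trf t (mQ t g h (mP t iK (K - iK) (mQ t g h (u0,u1,u2,u3,u4))))
     = u0 * (A*K + iA*iK - (b*b + g*g)*iK - (K - iK)*((b+g)*m - 1))
     + u1 * (A*K - ((b+g)*m - 1)*iK - (K - iK)*m*m)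
     + u2 * (iA*iK + (A*K - iA*iK)*t - b*b*(iK + (K - iK)*t))
     + (u3+u4) * (t*(A*K - b*b*iK - b*(K - iK)*m))"
  using assms by simp algebra

primrec mpow :: "'a::semiring_1^'n^'n \<Rightarrow> nat \<Rightarrow> 'a^'n^'n" where
  "mpow M 0 = mat 1"
| "mpow M (Suc n) = M ** mpow M n"

definition rm :: "int^2^2 \<Rightarrow> real^2^2" where
  "rm M = (\<chi> i j. real_of_int (M $ i $ j))"

lemma rm_mult: "rm (M ** N) = rm M ** rm N"
  by (simp add: rm_def matrix_matrix_mult_def vec_eq_iff sum_2)
lemma rm_one: "rm (mat 1) = mat 1"
  by (simp add: rm_def mat_def vec_eq_iff)
lemma rm_trace: "trace (rm M) = real_of_int (trace M)"
  by (simp add: rm_def trace_def sum_2)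
lemma rm_det: "det (rm M) = real_of_int (det M)"
  by (simp add: rm_def det_2)
lemma rm_mpow: "rm (mpow M n) = mpow (rm M) n"
  by (induct n) (simp_all add: rm_one rm_mult)

lemma phi_Nil: "phi A B [] = mat 1"
  by (simp add: phi_def)
lemma phi_Cons: "phi A B (c # w) = (case c of La \<Rightarrow> A | Lb \<Rightarrow> B) ** phi A B w"
  by (simp add: phi_def)
lemma phi_append: "phi A B (u @ v) = phi A B u ** phi A B v"
  by (induct u) (simp_all add: phi_Cons phi_Nil matrix_mul_assoc)
lemma pw_Suc: "pw u (Suc n) = u @ pw u n"
  by (simp add: pw_def)
lemma phi_pw: "phi A B (pw u n) = mpow (phi A B u) n"
  by (induct n) (simp_all add: pw_Suc phi_append, simp add: pw_def phi_Nil)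

inductive_set gen :: "real^2^2 \<Rightarrow> real^2^2 \<Rightarrow> (real^2^2) set" for X Y where
  gen_one: "mat 1 \<in> gen X Y"
| gen_X: "W \<in> gen X Y \<Longrightarrow> W ** X \<in> gen X Y"
| gen_Y: "W \<in> gen X Y \<Longrightarrow> W ** Y \<in> gen X Y"

lemma concat_gen:
  assumes "set us \<subseteq> {[La, Lb], [La, Lb, Lb]}"
  shows "rm (phi A B (concat us)) \<in> gen (rm (A ** B)) (rm (A ** (B ** B)))"
  using assms
proof (induct us rule: rev_induct)
  case Nil
  then show ?case by (simp add: phi_Nil rm_one gen_one)
next
  case (snoc u us)
  then have IH: "rm (phi A B (concat us)) \<in> gen (rm (A ** B)) (rm (A ** (B ** B)))" by simp
  have "u = [La, Lb] \<or> u = [La, Lb, Lb]" using snoc.prems by simp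
  then show ?case
  proof
    assume "u = [La, Lb]"
    then have "rm (phi A B (concat (us @ [u]))) = rm (phi A B (concat us)) ** rm (A ** B)"
      by (simp add: phi_append phi_Cons phi_Nil rm_mult)
    then show ?thesis using IH gen_X by simp
  next
    assume "u = [La, Lb, Lb]"
    then have "rm (phi A B (concat (us @ [u]))) = rm (phi A B (concat us)) ** rm (A ** (B ** B))"
      by (simp add: phi_append phi_Cons phi_Nil rm_mult)
    then show ?thesis using IH gen_Y by simp
  qed
qed

lemma T_pos:
  fixes a b t K iK g h u0 u1 u2 u3 u4 m A iA :: real
  assumes "K * iK = 1" "b * g = 1" "h = b - g" "m = g + h*t" "A * iA = 1"
    and "b > 1" "K \<ge> 1" "A \<ge> 1" "m \<ge> b" "A \<ge> m^2" "A + iA - (b*b + g*g) > 0"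
    and "u0 > 0" "u1 \<ge> 0" "u2 \<ge> 0" "u3 \<ge> 0" "u4 \<ge> 0"
  shows "0 < u0 * (A*K + iA*iK - (b*b + g*g)*iK - (K - iK)*((b+g)*m - 1))
     + u1 * (A*K - ((b+g)*m - 1)*iK - (K - iK)*m*m)
     + u2 * (iA*iK + (A*K - iA*iK)*t - b*b*(iK + (K - iK)*t))
     + (u3+u4) * (t*(A*K - b*b*iK - b*(K - iK)*m))"
proof -
  have gb: "g = 1/b" using assms(2,6) by (simp add: field_simps)
  have g0: "g > 0" "g < 1" using assms(6) gb by simp_all
  have iKe: "iK = 1/K" using assms(1,7) by (simp add: field_simps)
  have iK0: "iK > 0" "iK \<le> 1" using assms(7) iKe by simp_all
  have iAe: "iA = 1/A" using assms(5,8) by (simp add: field_simps)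
  have iA0: "iA > 0" "iA \<le> 1" using assms(8) iAe by simp_all
  have KiK: "K - iK \<ge> 0" using iK0 assms(7) by linarith
  have t1: "t \<ge> 1"
  proof -
    have "(b - g) * (t - 1) = m - b" unfolding assms(4) assms(3) by (simp add: algebra_simps)
    then have "(b - g) * (t - 1) \<ge> 0" using assms(9) by simp
    moreover have "b - g > 0" using g0 assms(6) by linarith
    ultimately show ?thesis by (simp add: zero_le_mult_iff)
  qed
  have mq: "m*m - (b+g)*m + 1 \<ge> 0"
  proof -
    have "m*m - (b+g)*m + 1 = (m - b)*(m - g)" using assms(2) by (simp add: algebra_simps)
    moreover have "m - g \<ge> 0" using g0 assms(6,9) by linarith
    ultimately show ?thesis using assms(9) by simp
  qed
  have Am: "A - m*m \<ge> 0" using assms(10) by (simp add: power2_eq_square)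
  have bm: "b*m \<ge> b*b" using assms(6,9) by (simp add: mult_left_mono)
  have mm: "m*m \<ge> b*m" using assms(6,9) by (simp add: mult_right_mono)
  have TP: "A*K - ((b+g)*m - 1)*iK - (K - iK)*m*m \<ge> 0"
  proof -
    have "A*K - ((b+g)*m - 1)*iK - (K - iK)*m*m = K*(A - m*m) + iK*(m*m - (b+g)*m + 1)"
      by (simp add: algebra_simps)
    also have "\<dots> \<ge> 0" using Am mq iK0 assms(7) by simp
    finally show ?thesis .
  qed
  have TQ: "iA*iK + (A*K - iA*iK)*t - b*b*(iK + (K - iK)*t) \<ge> 0"
  proof -
    have "iA*iK + (A*K - iA*iK)*t - b*b*(iK + (K - iK)*t) = K*t*(A - b*b) + iK*(t - 1)*(b*b - iA)"
      by (simp add: algebra_simps)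
    moreover have "A - b*b \<ge> 0" using Am bm mm by linarith
    moreover have "b*b - iA \<ge> 0" using iA0 assms(6)
      by (smt (verit) mult_le_cancel_left1 mult_pos_pos)
    ultimately show ?thesis using t1 iK0 assms(7) by simp
  qed
  have TPQ: "t*(A*K - b*b*iK - b*(K - iK)*m) \<ge> 0"
  proof -
    have "A*K - b*b*iK - b*(K - iK)*m = K*(A - b*m) + iK*(b*m - b*b)" by (simp add: algebra_simps)
    moreover have "A - b*m \<ge> 0" using Am mm by linarith
    ultimately have "A*K - b*b*iK - b*(K - iK)*m \<ge> 0" using bm iK0 assms(7) by simp
    then show ?thesis using t1 by simp
  qed
  have TI: "A*K + iA*iK - (b*b + g*g)*iK - (K - iK)*((b+g)*m - 1) > 0"
  proof -
    have "A*K + iA*iK - (b*b + g*g)*iK - (K - iK)*((b+g)*m - 1)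
        = (K - iK)*(A - (b+g)*m + 1) + iK*(A + iA - (b*b + g*g))" by (simp add: algebra_simps)
    moreover have "A - (b+g)*m + 1 \<ge> 0" using Am mq by linarith
    moreover have "iK*(A + iA - (b*b + g*g)) > 0" using iK0 assms(11) by simp
    ultimately show ?thesis using KiK by (metis add_nonneg_pos mult_nonneg_nonneg)
  qed
  show ?thesis using TI TP TQ TPQ assms(12-16)
    by (simp add: add_pos_nonneg)
qed
lemma ineq_ii:
  fixes a x y z :: real
  assumes a1: "a > 1" and az: "a + 1/a = z" and x2: "x \<ge> 2" and yx: "y \<ge> x + 1"
    and axy: "a \<ge> x*y + 1" and cs: "z \<le> y^2 - 1 \<or> z \<ge> y^2"
    and hyp: "(y*z - x)^2 \<le> z^3 - 3*z"
  shows "a*(y*a - x)^2 \<le> (a^2 - 1)^2"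
  using cs
proof
  assume zc: "z \<ge> y^2"
  have "a - y^2 \<ge> -1/a" using az zc by linarith
  then have "a^3 * (a - y^2) \<ge> a^3 * (-1/a)" using a1 by (intro mult_left_mono) auto
  also have "a^3 * (-1/a) = -(a^2)" using a1 by (simp add: power3_eq_cube power2_eq_square field_simps)
  finally have h1: "a^3 * (a - y^2) \<ge> -(a^2)" .
  have h2: "(2*x*y - 3)*a^2 - x^2*a + 1 \<ge> 0"
  proof -
    have xy2: "x*y \<ge> 2*y" using x2 yx by (intro mult_right_mono) auto
    have "2*x*y - 3 \<ge> x" using xy2 x2 yx by linarith
    then have "(2*x*y - 3)*a \<ge> x * a" using a1 by (intro mult_right_mono) auto
    moreover have "x * a \<ge> x * x" using x2 axy yx xy2 by (intro mult_left_mono) linarith+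
    ultimately have "(2*x*y - 3)*a \<ge> x*x" by linarith
    then have "(2*x*y - 3)*a*a \<ge> x*x*a" using a1 by (intro mult_right_mono) auto
    then show ?thesis by (simp add: power2_eq_square algebra_simps)
  qed
  have "(a^2 - 1)^2 - a*(y*a - x)^2 = a^3 * (a - y^2) + (2*x*y - 2)*a^2 - x^2*a + 1"
    by (simp add: power2_eq_square power3_eq_cube algebra_simps)
  then show ?thesis using h1 h2 by (simp add: algebra_simps)
next
  assume zc: "z \<le> y^2 - 1"
  have ay: "y^2 - a \<ge> 1" using zc az a1 by (smt (verit) divide_pos_pos)
  have H: "a^6 + 1 - a*(y*a^2 - x*a + y)^2 \<ge> 0"
  proof -
    have "a^3 * (y*z - x)^2 \<le> a^3 * (z^3 - 3*z)" using hyp a1 by (intro mult_left_mono) auto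
    moreover have "a^3 * (y*z - x)^2 = a*(y*a^2 - x*a + y)^2"
      unfolding az[symmetric] using a1 by (simp add: power2_eq_square power3_eq_cube field_simps)
    moreover have "a^3 * (z^3 - 3*z) = a^6 + 1"
      unfolding az[symmetric] using a1 by (simp add: eval_nat_numeral field_simps)
    ultimately show ?thesis by simp
  qed
  have E: "a^2 * ((a^2 - 1)^2 - a*(y*a - x)^2)
      = (a^6 + 1 - a*(y*a^2 - x*a + y)^2) + a^2*(2*a*(y^2 - a) + 1 - 2*x*y) + y^2*a - 1"
    by (simp add: eval_nat_numeral algebra_simps)
  have "2*a*(y^2 - a) \<ge> 2*a" using ay a1 by simp
  then have B: "a^2*(2*a*(y^2 - a) + 1 - 2*x*y) \<ge> 0" using axy by simp
  have "y*y \<ge> 1*1" using yx x2 by (intro mult_mono) auto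
  then have "y*y*a \<ge> 1*1" using a1 by (intro mult_mono) auto
  then have "y^2*a \<ge> 1*1" by (simp add: power2_eq_square)
  then have C: "y^2*a - 1 \<ge> 0" by simp
  have "a^2 * ((a^2 - 1)^2 - a*(y*a - x)^2) \<ge> 0" using E H B C by linarith
  then have "(a^2 - 1)^2 - a*(y*a - x)^2 \<ge> 0" using a1 by (simp add: zero_le_mult_iff)
  then show ?thesis by simp
qed

lemma ineq_i:
  fixes a b x y z m :: real
  assumes a1: "a > 1" and az: "a + 1/a = z" and x2: "x \<ge> 2" and yx: "y \<ge> x + 1"
    and axy: "a \<ge> x*y + 1" and b1: "b \<ge> 1" and bq: "b + 1/b = y*z - x"
    and md: "m = a^2*(y*a - x)/(a^2 - 1)"
  shows "m \<ge> b"
proof -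
  define u where "u = y*a - x"
  have xa: "x*a \<ge> x" using x2 a1 by simp
  have "(x+1)*a \<le> y*a" using yx a1 by (intro mult_right_mono) auto
  then have ua: "u \<ge> a" unfolding u_def using xa by (simp add: algebra_simps)
  have "a*a > 1*1" using a1 by (intro mult_strict_mono) auto
  then have a21: "a^2 - 1 > 0" by (simp add: power2_eq_square)
  have mu: "m = u * (a^2/(a^2 - 1))" unfolding md u_def by simp
  have "a^2/(a^2 - 1) \<ge> 1" using a21 by simp
  then have "m \<ge> u" unfolding mu using ua a1 by (smt (verit) mult_le_cancel_left1)
  then have m1: "m \<ge> 1" using ua a1 by linarith
  have xy2: "x*y \<ge> 2*y" using x2 yx by (intro mult_right_mono) auto
  have N: "(a^2 - 1)^2 - a*u*(x*a - y) \<ge> 0"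
  proof -
    have e: "(a^2 - 1)^2 - a*u*(x*a - y) = a^3*(a - x*y) + a*((x^2 + y^2 - 2)*a - x*y) + 1"
      unfolding u_def by (simp add: eval_nat_numeral algebra_simps)
    have "x*x \<ge> 2*2" using x2 by (intro mult_mono) auto
    then have "x^2 + y^2 - 2 \<ge> 1" by (simp add: power2_eq_square) (smt (verit) zero_le_square)
    then have "(x^2 + y^2 - 2)*a \<ge> 1*a" using a1 by (intro mult_right_mono) auto
    then have "(x^2 + y^2 - 2)*a - x*y \<ge> 0" using axy by linarith
    then have "a*((x^2 + y^2 - 2)*a - x*y) \<ge> 0" using a1 by simp
    moreover have "a^3*(a - x*y) \<ge> 0" using axy a1 by simp
    ultimately show ?thesis unfolding e by linarith
  qed
  have u0: "u > 0" using ua a1 by linarith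
  define D where "D = a^2*(a^2 - 1)*u"
  have Dp: "D > 0" unfolding D_def using a21 u0 a1 by simp
  have mpos: "m > 0" using m1 by simp
  have t1: "m * D = a^4*u^2" unfolding D_def mu using a21 by (simp add: field_simps eval_nat_numeral)
  have t2: "(1/m) * D = (a^2 - 1)^2" unfolding D_def mu using a21 u0 a1 by (simp add: field_simps eval_nat_numeral)
  have t3: "(y*z - x) * D = (y*a^2 + y - x*a)*a*(a^2 - 1)*u"
    unfolding D_def az[symmetric] using a1 by (simp add: field_simps eval_nat_numeral)
  have "(m + 1/m - (y*z - x)) * D = a^4*u^2 + (a^2 - 1)^2 - (y*a^2 + y - x*a)*a*(a^2 - 1)*u"
    using t1 t2 t3 by (simp add: algebra_simps)
  also have "\<dots> = (a^2 - 1)^2 - a*u*(x*a - y)" unfolding u_def by (simp add: eval_nat_numeral algebra_simps)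
  finally have "(m + 1/m - (y*z - x)) * D \<ge> 0" using N by simp
  then have "m + 1/m - (y*z - x) \<ge> 0" using Dp by (simp add: zero_le_mult_iff)
  then have mq: "m + 1/m \<ge> b + 1/b" using bq by simp
  show ?thesis
  proof (rule ccontr)
    assume "\<not> m \<ge> b"
    then have bm: "b > m" by simp
    have "(b + 1/b) - (m + 1/m) = (b - m)*(1 - 1/(b*m))" using m1 b1 by (simp add: field_simps)
    moreover have "b*m > 1" using bm m1 by (smt (verit) mult_less_cancel_left1 mult_le_cancel_left1)
    then have "1 - 1/(b*m) > 0" by simp
    ultimately have "(b + 1/b) - (m + 1/m) > 0" using bm by simp
    then show False using mq by simp
  qed
qed
definition prj :: "real \<Rightarrow> real^2^2 \<Rightarrow> real^2^2" where
  "prj a X = (1/(a^2-1)) *\<^sub>R (a *\<^sub>R X - mat 1)"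

lemma prj_facts:
  fixes X :: "real^2^2"
  assumes d: "det X = 1" and tr: "trace X = a + 1/a" and a1: "a > 1"
  shows "prj a X ** prj a X = prj a X" "trace (prj a X) = 1" "det (prj a X) = 0"
    "X = (1/a) *\<^sub>R mat 1 + (a - 1/a) *\<^sub>R prj a X"
proof -
  have "a*a > 1*1" using a1 by (intro mult_strict_mono) auto
  then have a2: "a^2 - 1 \<noteq> 0" by (simp add: power2_eq_square)
  have a0: "a \<noteq> 0" using a1 by simp
  have d': "X$1$1 * X$2$2 - X$1$2 * X$2$1 = 1" using d by (simp add: det_2)
  have t': "X$1$1 + X$2$2 = a + 1/a" using tr by (simp add: trace_def sum_2)
  have t'': "a*(X$1$1 + X$2$2) = a^2 + 1" using t' a0 by (simp add: field_simps power2_eq_square)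
  define c where "c = 1/(a^2-1)"
  have c: "c * (a^2 - 1) = 1" unfolding c_def using a2 by simp
  have p: "prj a X = c *\<^sub>R (a *\<^sub>R X - mat 1)" unfolding prj_def c_def ..
  show "prj a X ** prj a X = prj a X"
    unfolding p
    apply (simp add: vec_eq_iff forall_2 matrix_matrix_mult_def sum_2 mat_def)
    using d' t'' c by algebra
  show "trace (prj a X) = 1"
    unfolding p
    apply (simp add: trace_def sum_2 mat_def)
    using d' t'' c by algebra
  show "det (prj a X) = 0"
    unfolding p
    apply (simp add: det_2 mat_def)
    using d' t'' c by algebra
  define ia where "ia = 1/a"
  have ia: "a * ia = 1" unfolding ia_def using a0 by simp
  show "X = (1/a) *\<^sub>R mat 1 + (a - 1/a) *\<^sub>R prj a X"
    unfolding p ia_def[symmetric]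
    apply (simp add: vec_eq_iff forall_2 mat_def)
    using d' t'' c ia by algebra
qed
lemma exists_root:
  fixes w :: real assumes w2: "w > 2"
  shows "\<exists>a. a > 1 \<and> a + 1/a = w"
proof -
  have "w*w > 2*2" using w2 by (intro mult_strict_mono) auto
  then have w4: "w^2 - 4 > 0" by (simp add: power2_eq_square)
  define s where "s = sqrt (w^2 - 4)"
  have s0: "s > 0" unfolding s_def using w4 by simp
  have ss: "s^2 = w^2 - 4" unfolding s_def using w4 by simp
  define a where "a = (w + s)/2"
  have a1: "a > 1" unfolding a_def using s0 w2 by simp
  have "a*a - w*a + 1 = 0" unfolding a_def using ss by (simp add: power2_eq_square field_simps)
  then have "a + 1/a = w" using a1 by (simp add: field_simps)
  then show ?thesis using a1 by blast
qed

lemma combo: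
  fixes P :: "real^2^2" assumes PP: "P ** P = P"
  shows "(\<alpha> *\<^sub>R mat 1 + \<beta> *\<^sub>R P) ** (\<gamma> *\<^sub>R mat 1 + \<delta> *\<^sub>R P)
       = (\<alpha>*\<gamma>) *\<^sub>R mat 1 + (\<alpha>*\<delta> + \<beta>*\<gamma> + \<beta>*\<delta>) *\<^sub>R P"
  by (simp add: mm_radd mm_ladd mm_lscale mm_rscale PP scaleR_add_left algebra_simps)

lemma mpow_formula:
  fixes X P :: "real^2^2"
  assumes PP: "P ** P = P" and Xd: "X = (1/a) *\<^sub>R mat 1 + (a - 1/a) *\<^sub>R P" and a0: "a > 0"
  shows "mpow X n = (1/a^n) *\<^sub>R mat 1 + (a^n - 1/a^n) *\<^sub>R P"
proof (induct n)
  case 0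
  then show ?case by simp
next
  case (Suc n)
  have "mpow X (Suc n) = X ** ((1/a^n) *\<^sub>R mat 1 + (a^n - 1/a^n) *\<^sub>R P)"
    using Suc by simp
  also have "\<dots> = (1/a * (1/a^n)) *\<^sub>R mat 1
       + (1/a*(a^n - 1/a^n) + (a - 1/a)*(1/a^n) + (a - 1/a)*(a^n - 1/a^n)) *\<^sub>R P"
    unfolding Xd by (rule combo[OF PP])
  also have "1/a * (1/a^n) = 1/a^(Suc n)" by simp
  also have "1/a*(a^n - 1/a^n) + (a - 1/a)*(1/a^n) + (a - 1/a)*(a^n - 1/a^n) = a^(Suc n) - 1/a^(Suc n)"
    using a0 by (simp add: field_simps)
  finally show ?case .
qed

lemma core:
  fixes Ar Br W :: "real^2^2" and x y z :: real and k :: nat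
  assumes dA: "det Ar = 1" and dB: "det Br = 1" and tA: "trace Ar = x" and tB: "trace Br = y"
    and tAB: "trace (Ar ** Br) = z"
    and x2: "x \<ge> 2" and yx: "y \<ge> x + 1" and zy: "z \<ge> y^2 - 1" and cs: "z \<le> y^2 - 1 \<or> z \<ge> y^2"
    and hyp: "trace (mpow (Ar ** (Br ** Br)) 2) \<le> trace (mpow (Ar ** Br) 3) - 2"
    and Wg: "W \<in> gen (Ar ** Br) (Ar ** (Br ** Br))"
  shows "trace (W ** ((Ar ** (Br ** Br)) ** (mpow (Ar ** Br) k ** (Ar ** (Br ** Br)))))
         < trace (W ** mpow (Ar ** Br) (k + 3))"
proof -
  define X where "X = Ar ** Br"
  define Y where "Y = Ar ** (Br ** Br)"
  define q where "q = y*z - x"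
  have dX: "det X = 1" unfolding X_def using dA dB by (simp add: det_mul)
  have dY: "det Y = 1" unfolding Y_def using dA dB by (simp add: det_mul)
  have tX: "trace X = z" using tAB X_def by simp
  have BB: "Br ** Br = y *\<^sub>R Br - mat 1" using CH2[of Br] dB tB by simp
  have YX: "Y = X ** Br" unfolding X_def Y_def by (simp add: matrix_mul_assoc)
  have tY: "trace Y = q"
    unfolding Y_def BB by (simp add: mm_lsub mm_rscale trace_minus trace_scale X_def[symmetric] tX tA q_def)
  have XX: "X ** X = z *\<^sub>R X - mat 1" using CH2[of X] dX tX by simp
  have YY: "Y ** Y = q *\<^sub>R Y - mat 1" using CH2[of Y] dY tY by simp
  have tXY: "trace (X ** Y) = z*q - y"
  proof -
    have adj: "(z *\<^sub>R mat 1 - X) ** X = mat 1" using XX by (simp add: mm_rsub mm_lscale)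
    have "(z *\<^sub>R mat 1 - X) ** Y = Br" using adj YX by (metis matrix_mul_assoc matrix_mul_lid)
    then have "trace ((z *\<^sub>R mat 1 - X) ** Y) = y" using tB by simp
    moreover have "trace ((z *\<^sub>R mat 1 - X) ** Y) = z * q - trace (X ** Y)"
      by (simp add: mm_rsub mm_lscale trace_minus trace_scale tY)
    ultimately show ?thesis by simp
  qed
  have tY2: "trace (mpow Y 2) = q^2 - 2"
    by (simp add: numeral_2_eq_2 YY trace_minus trace_scale trace_one tY power2_eq_square)
  have tX3: "trace (mpow X 3) = z^3 - 3*z"
  proof -
    have "mpow X 3 = X ** (X ** X)" by (simp add: numeral_3_eq_3)
    also have "\<dots> = z *\<^sub>R (X ** X) - X" by (simp add: XX mm_lsub mm_rscale)
    also have "\<dots> = z *\<^sub>R (z *\<^sub>R X - mat 1) - X" by (simp add: XX)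
    finally have e: "mpow X 3 = z *\<^sub>R (z *\<^sub>R X - mat 1) - X" .
    have "trace (mpow X 3) = z * (z * z - 2) - z"
      unfolding e by (simp only: trace_minus trace_scale trace_one tX)
    then show ?thesis by (simp add: power3_eq_cube algebra_simps)
  qed
  have hq: "q^2 \<le> z^3 - 3*z" using hyp tY2 tX3 unfolding X_def Y_def by simp
  have y3: "y \<ge> 3" using x2 yx by simp
  have "y*y \<ge> (x+1)*y" using yx y3 by (intro mult_right_mono) auto
  then have zxy: "z \<ge> x*y + 2" using zy y3 by (simp add: power2_eq_square algebra_simps)
  have "x*y \<ge> 2*3" using x2 y3 by (intro mult_mono) auto
  then have z8: "z \<ge> 8" using zxy by simp
  obtain a where a1: "a > 1" and az: "a + 1/a = z" using exists_root[of z] z8 by auto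
  have "1/a < 1" using a1 by simp
  then have axy: "a \<ge> x*y + 1" using az zxy by linarith
  have "y*z \<ge> y*8" using y3 z8 by (intro mult_left_mono) auto
  then have q2: "q > 2" unfolding q_def using yx y3 by linarith
  obtain b where b1: "b > 1" and bq: "b + 1/b = q" using exists_root[of q] q2 by auto
  define P where "P = prj a X"
  define Q where "Q = prj b Y"
  have tX': "trace X = a + 1/a" using tX az by simp
  have tY': "trace Y = b + 1/b" using tY bq by simp
  note PF = prj_facts[OF dX tX' a1, folded P_def]
  note QF = prj_facts[OF dY tY' b1, folded Q_def]
  have PP: "P ** P = P" and trP: "trace P = 1" and dP: "det P = 0"
    and Xd: "X = (1/a) *\<^sub>R mat 1 + (a - 1/a) *\<^sub>R P" using PF by auto
  have QQ: "Q ** Q = Q" and trQ: "trace Q = 1" and dQ: "det Q = 0"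
    and Yd: "Y = (1/b) *\<^sub>R mat 1 + (b - 1/b) *\<^sub>R Q" using QF by auto
  define t where "t = trace (P ** Q)"
  have PQP: "P ** Q ** P = t *\<^sub>R P" using rank1[OF dP, of Q] t_def by simp
  have QPQ: "Q ** P ** Q = t *\<^sub>R Q" using rank1[OF dQ, of P] t_def trace_mul_sym[of Q P] by simp
  define g where "g = 1/b"
  define h where "h = b - 1/b"
  have Yd': "Y = g *\<^sub>R mat 1 + h *\<^sub>R Q" using Yd g_def h_def by simp
  define m where "m = g + h*t"
  have m_tr: "trace (P ** Y) = m"
    unfolding Yd' m_def by (simp add: mm_ladd mm_rscale trace_plus trace_scale trP t_def)
  have m_val: "m = a^2*(y*a - x)/(a^2 - 1)"
  proof -
    have "trace (P ** Y) = (1/(a^2-1)) * (a * trace (X ** Y) - trace Y)"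
      unfolding P_def prj_def by (simp add: mm_lscale mm_rsub trace_scale trace_minus)
    also have "\<dots> = (1/(a^2-1)) * (a^2*(y*a - x))"
    proof -
      have "a * trace (X ** Y) - trace Y = a^2*(y*a - x)"
        unfolding tXY tY q_def az[symmetric] using a1 by (simp add: field_simps power2_eq_square)
      then show ?thesis by simp
    qed
    finally show ?thesis using m_tr by simp
  qed
  have bq': "b + 1/b = y*z - x" using bq q_def by simp
  have mb: "m \<ge> b" using ineq_i[OF a1 az x2 yx axy _ bq' m_val] b1 by simp
  have hq': "(y*z - x)^2 \<le> z^3 - 3*z" using hq q_def by simp
  have ii: "a*(y*a - x)^2 \<le> (a^2 - 1)^2" using ineq_ii[OF a1 az x2 yx axy cs hq'] .
  have "a*a > 1*1" using a1 by (intro mult_strict_mono) auto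
  then have a21: "a^2 - 1 > 0" by (simp add: power2_eq_square)
  have Am: "a^3 \<ge> m^2"
  proof -
    have e0: "m*(a^2 - 1) = a^2*(y*a - x)" unfolding m_val using a21 by simp
    have "m^2 * (a^2 - 1)^2 = (m*(a^2 - 1))^2" by algebra
    also have "\<dots> = (a^2*(y*a - x))^2" using e0 by simp
    also have "\<dots> = a^3 * (a*(y*a - x)^2)" by algebra
    finally have e: "m^2 * (a^2 - 1)^2 = a^3 * (a*(y*a - x)^2)" .
    have "a^3 * (a*(y*a - x)^2) \<le> a^3 * (a^2 - 1)^2" using ii a1 by (intro mult_left_mono) auto
    then have "m^2 * (a^2 - 1)^2 \<le> a^3 * (a^2 - 1)^2" using e by simp
    then show ?thesis using a21 by simp
  qed
  have gb: "b * g = 1" unfolding g_def using b1 by simp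
  have hbg: "h = b - g" unfolding h_def g_def ..
  have t1: "t \<ge> 0"
  proof -
    have "(b - g) * (t - 1) = m - b" unfolding m_def hbg by (simp add: algebra_simps)
    moreover have "g < 1" unfolding g_def using b1 by simp
    then have "b - g > 0" using b1 by linarith
    ultimately have "(b - g) * (t - 1) \<ge> 0" "b - g > 0" using mb by auto
    then have "t - 1 \<ge> 0" by (simp add: zero_le_mult_iff)
    then show ?thesis by simp
  qed
  have cone: "\<exists>u. pos5 u \<and> V = ev P Q u" if "V \<in> gen X Y" for V
    using that
  proof (induct rule: gen.induct)
    case gen_one
    have "mat 1 = ev P Q (1,0,0,0,0)" by simp
    moreover have "pos5 (1,0,0,0,0)" by simp
    ultimately show ?case by blast
  next
    case (gen_X V)
    then obtain u where u: "pos5 u" "V = ev P Q u" by blast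
    have "V ** X = ev P Q (mP t (1/a) (a - 1/a) u)"
      unfolding u(2) by (subst Xd) (rule ev_mulP[OF PP PQP])
    moreover have "pos5 (mP t (1/a) (a - 1/a) u)"
    proof (rule mP_pos[OF u(1) t1])
      show "1/a > 0" using a1 by simp
      have "1/a < 1" using a1 by simp
      then show "a - 1/a \<ge> 0" using a1 by linarith
    qed
    ultimately show ?case by blast
  next
    case (gen_Y V)
    then obtain u where u: "pos5 u" "V = ev P Q u" by blast
    have "V ** Y = ev P Q (mQ t g h u)"
      unfolding u(2) by (subst Yd') (rule ev_mulQ[OF QQ QPQ])
    moreover have "pos5 (mQ t g h u)"
    proof (rule mQ_pos[OF u(1) t1])
      show "g > 0" unfolding g_def using b1 by simp
      have "1/b < 1" using b1 by simp
      then show "h \<ge> 0" unfolding h_def using b1 by linarith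
    qed
    ultimately show ?case by blast
  qed
  have WG: "W \<in> gen X Y" using Wg unfolding X_def Y_def .
  obtain u where pu: "pos5 u" and Wu: "W = ev P Q u" using cone[OF WG] by blast
  obtain u0 u1 u2 u3 u4 where u5: "u = (u0,u1,u2,u3,u4)" by (metis prod_cases5)
  define K where "K = a^k"
  define iK where "iK = 1/a^k"
  define A where "A = a^3"
  define iA where "iA = 1/a^3"
  have Xk: "mpow X k = iK *\<^sub>R mat 1 + (K - iK) *\<^sub>R P"
    unfolding K_def iK_def using mpow_formula[OF PP Xd] a1 by simp
  have Xk3: "mpow X (k+3) = (iA*iK) *\<^sub>R mat 1 + (A*K - iA*iK) *\<^sub>R P"
    unfolding K_def iK_def A_def iA_def using mpow_formula[OF PP Xd, of "k+3"] a1
    by (simp add: power_add mult.commute)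
  have LHS: "trace (W ** (Y ** (mpow X k ** Y))) = trf t (mQ t g h (mP t iK (K - iK) (mQ t g h u)))"
  proof -
    have "W ** (Y ** (mpow X k ** Y)) = ((W ** Y) ** mpow X k) ** Y" by (simp add: matrix_mul_assoc)
    also have "\<dots> = ev P Q (mQ t g h (mP t iK (K - iK) (mQ t g h u)))"
      unfolding Wu Xk Yd' by (simp only: ev_mulQ[OF QQ QPQ] ev_mulP[OF PP PQP])
    finally show ?thesis using ev_trace[OF trP trQ t_def[symmetric]] by simp
  qed
  have RHS: "trace (W ** mpow X (k+3)) = trf t (mP t (iA*iK) (A*K - iA*iK) u)"
    unfolding Wu Xk3 by (simp only: ev_mulP[OF PP PQP] ev_trace[OF trP trQ t_def[symmetric]])
  have KiK: "K * iK = 1" unfolding K_def iK_def using a1 by simp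
  have AiA: "A * iA = 1" unfolding A_def iA_def using a1 by simp
  have K1: "K \<ge> 1" unfolding K_def using a1 by simp
  have A1: "A \<ge> 1" unfolding A_def using a1 by simp
  have delta: "A + iA - (b*b + g*g) > 0"
  proof -
    have "A + iA = z^3 - 3*z" unfolding A_def iA_def az[symmetric] using a1
      by (simp add: field_simps eval_nat_numeral)
    moreover have "b*b + g*g = q^2 - 2" unfolding g_def bq[symmetric] using b1
      by (simp add: field_simps eval_nat_numeral)
    ultimately show ?thesis using hq by simp
  qed
  have Am': "A \<ge> m^2" using Am A_def by simp
  have pos: "u0 > 0" "u1 \<ge> 0" "u2 \<ge> 0" "u3 \<ge> 0" "u4 \<ge> 0" using pu u5 by auto
  have "trf t (mP t (iA*iK) (A*K - iA*iK) u) - trf t (mQ t g h (mP t iK (K - iK) (mQ t g h u))) > 0"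
    unfolding u5 final_ident[OF KiK gb hbg m_def AiA]
    by (rule T_pos[OF KiK gb hbg m_def AiA b1 K1 A1 mb Am' delta pos])
  then have "trace (W ** (Y ** (mpow X k ** Y))) < trace (W ** mpow X (k+3))"
    using LHS RHS by simp
  then show ?thesis unfolding X_def Y_def .
qed

theorem lemma7p2:
  fixes A B :: mat2 and w :: "letter list" and k :: nat
  assumes "A \<in> SL2Z" and "B \<in> SL2Z"
    and "A ** B \<noteq> B ** A"
    and "well_oriented A B"
    and "2 \<le> trace A" and "trace A < trace B"
    and "trace (A ** B) > trace (B ** B)"
    and "wtr A B (pw [La, Lb, Lb] 2) \<le> wtr A B (pw [La, Lb] 3) - 2"
    and "k \<ge> 1"
    and "6 dvd length (w @ [La, Lb, Lb] @ pw [La, Lb] k @ [La, Lb, Lb])"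
    and "w = [] \<or> (\<exists>us. set us \<subseteq> {[La, Lb], [La, Lb, Lb]} \<and> w = concat us)"
  shows "wtr A B (w @ [La, Lb, Lb] @ pw [La, Lb] k @ [La, Lb, Lb])
         < wtr A B (w @ pw [La, Lb] (k + 3))"
proof -
  obtain us where us: "set us \<subseteq> {[La, Lb], [La, Lb, Lb]}" "w = concat us"
  proof (cases "w = []")
    case True
    then show ?thesis using that[of "[]"] by simp
  next
    case False
    then show ?thesis using assms(11) that by blast
  qed
  define Ar where "Ar = rm A"
  define Br where "Br = rm B"
  define x where "x = real_of_int (trace A)"
  define y where "y = real_of_int (trace B)"
  define z where "z = real_of_int (trace (A ** B))"
  have pX: "phi A B [La, Lb] = A ** B" by (simp add: phi_Cons phi_Nil)
  have pY: "phi A B [La, Lb, Lb] = A ** (B ** B)" by (simp add: phi_Cons phi_Nil)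
  have dA: "det Ar = 1" unfolding Ar_def using assms(1) by (simp add: rm_det SL2Z_def)
  have dB: "det Br = 1" unfolding Br_def using assms(2) by (simp add: rm_det SL2Z_def)
  have tA: "trace Ar = x" unfolding Ar_def x_def by (simp add: rm_trace)
  have tB: "trace Br = y" unfolding Br_def y_def by (simp add: rm_trace)
  have tAB: "trace (Ar ** Br) = z" unfolding Ar_def Br_def z_def by (simp add: rm_trace rm_mult[symmetric])
  have x2: "x \<ge> 2" unfolding x_def using assms(5) by simp
  have yx: "y \<ge> x + 1" unfolding x_def y_def using assms(6) by simp
  have tBB: "trace (Br ** Br) = y^2 - 2" using CH2[of Br] dB tB
    by (simp add: trace_minus trace_scale trace_one power2_eq_square)
  have "trace (A ** B) \<ge> trace (B ** B) + 1" using assms(7) by simp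
  then have "z \<ge> real_of_int (trace (B ** B)) + 1" unfolding z_def by linarith
  also have "real_of_int (trace (B ** B)) = trace (Br ** Br)" unfolding Br_def by (simp add: rm_trace rm_mult[symmetric])
  finally have zy: "z \<ge> y^2 - 1" using tBB by simp
  have "trace (A ** B) \<le> (trace B)^2 - 1 \<or> trace (A ** B) \<ge> (trace B)^2" by linarith
  then have cs: "z \<le> y^2 - 1 \<or> z \<ge> y^2" unfolding z_def y_def
    by (metis (mono_tags, opaque_lifting) of_int_le_iff of_int_power of_int_diff of_int_1)
  have hyp: "trace (mpow (Ar ** (Br ** Br)) 2) \<le> trace (mpow (Ar ** Br) 3) - 2"
  proof -
    have "real_of_int (wtr A B (pw [La, Lb, Lb] 2)) \<le> real_of_int (wtr A B (pw [La, Lb] 3)) - 2"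
      using assms(8) by linarith
    then show ?thesis unfolding wtr_def phi_pw pX pY Ar_def Br_def
      by (simp add: rm_trace[symmetric] rm_mpow rm_mult)
  qed
  have Wg: "rm (phi A B w) \<in> gen (Ar ** Br) (Ar ** (Br ** Br))"
    unfolding Ar_def Br_def rm_mult[symmetric] us(2) by (rule concat_gen[OF us(1)])
  have C: "trace (rm (phi A B w) ** ((Ar ** (Br ** Br)) ** (mpow (Ar ** Br) k ** (Ar ** (Br ** Br)))))
         < trace (rm (phi A B w) ** mpow (Ar ** Br) (k + 3))"
    by (rule core[OF dA dB tA tB tAB x2 yx zy cs hyp Wg])
  have L: "real_of_int (wtr A B (w @ [La, Lb, Lb] @ pw [La, Lb] k @ [La, Lb, Lb]))
     = trace (rm (phi A B w) ** ((Ar ** (Br ** Br)) ** (mpow (Ar ** Br) k ** (Ar ** (Br ** Br)))))"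
    unfolding wtr_def phi_append phi_pw pX pY Ar_def Br_def
    by (simp add: rm_trace[symmetric] rm_mpow rm_mult)
  have R: "real_of_int (wtr A B (w @ pw [La, Lb] (k + 3)))
     = trace (rm (phi A B w) ** mpow (Ar ** Br) (k + 3))"
    unfolding wtr_def phi_append phi_pw pX pY Ar_def Br_def
    by (simp add: rm_trace[symmetric] rm_mpow rm_mult)
  have "real_of_int (wtr A B (w @ [La, Lb, Lb] @ pw [La, Lb] k @ [La, Lb, Lb]))
      < real_of_int (wtr A B (w @ pw [La, Lb] (k + 3)))" using C L R by simp
  then show ?thesis by simp
qed

end
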